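(* Let $\phi:[1]^m\to[1]^n$ be a surjective $\boxplus$-morphism and $\delta:[1]\to[1]^n$ an injective $\boxplus$-morphism. Then there exists a $\boxplus$-morphism $\delta^*:[1]\to[1]^m$ with $\phi\circ\delta^*=\delta$.
   Context: $[1]=\{0<1\}$, $[1]^n$ the product poset ($[1]^0=[0]$). An interval in a poset is a non-empty subset $[x,z]=\{y:x\leq y\leq z\}$. $\boxplus$ is the category whose objects are the $[1]^n$ ($n\geq0$) and whose morphisms are the monotone functions mapping every interval onto an interval. *)

theory Defs
  imports Main
begin

text \<open>The poset [1]^n: bool lists of length n (False < True), ordered componentwise.\<close>

definition cube :: "nat \<Rightarrow> bool list set" where
  "cube n = {xs. length xs = n}"

definition cube_le :: "bool list \<Rightarrow> bool list \<Rightarrow> bool" where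
  "cube_le xs ys \<longleftrightarrow> list_all2 (\<le>) xs ys"

definition cube_interval :: "nat \<Rightarrow> bool list \<Rightarrow> bool list \<Rightarrow> bool list set" where
  "cube_interval n x z = {y \<in> cube n. cube_le x y \<and> cube_le y z}"

definition is_interval :: "nat \<Rightarrow> bool list set \<Rightarrow> bool" where
  "is_interval n S \<longleftrightarrow> (\<exists>x\<in>cube n. \<exists>z\<in>cube n. cube_le x z \<and> S = cube_interval n x z)"

definition box_morphism :: "nat \<Rightarrow> nat \<Rightarrow> (bool list \<Rightarrow> bool list) \<Rightarrow> bool" where
  "box_morphism m n f \<longleftrightarrow>
     (\<forall>x\<in>cube m. f x \<in> cube n) \<and>
     (\<forall>x\<in>cube m. \<forall>y\<in>cube m. cube_le x y \<longrightarrow> cube_le (f x) (f y)) \<and>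
     (\<forall>S. is_interval m S \<longrightarrow> is_interval n (f ` S))"

end

theory Submission
  imports Defs
begin

lemma cle_nth: "cube_le xs ys \<longleftrightarrow> length xs = length ys \<and> (\<forall>i<length xs. xs!i \<le> ys!i)"
  unfolding cube_le_def by (simp add: list_all2_conv_all_nth)

lemma cle_refl: "cube_le x x" by (simp add: cle_nth)
lemma cle_trans: "cube_le x y \<Longrightarrow> cube_le y z \<Longrightarrow> cube_le x z"
  by (simp add: cle_nth)
lemma cle_antisym: "cube_le x y \<Longrightarrow> cube_le y x \<Longrightarrow> x = y"
  unfolding cle_nth by (auto intro!: nth_equalityI)

lemma cube1: "cube 1 = {[False],[True]}"
  unfolding cube_def by (auto simp: length_Suc_conv)

lemma cube1': "cube (Suc 0) = {[False],[True]}"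
  using cube1 by simp

lemma single_int: "p \<in> cube m \<Longrightarrow> is_interval m {p}"
  unfolding is_interval_def cube_interval_def
  by (rule bexI[of _ p], rule bexI[of _ p]) (auto simp: cle_refl dest: cle_antisym)

lemma ci1: "cube_interval 1 x z = {y. y \<in> {[False],[True]} \<and> cube_le x y \<and> cube_le y z}"
  unfolding cube_interval_def cube1 by simp
lemma int1_cases:
  assumes "is_interval 1 S"
  shows "S = {[False]} \<or> S = {[True]} \<or> S = {[False],[True]}"
proof -
  obtain x z where xz: "x \<in> cube 1" "z \<in> cube 1" "cube_le x z" "S = cube_interval 1 x z"
    using assms unfolding is_interval_def by auto
  have x: "x = [False] \<or> x = [True]" and z: "z = [False] \<or> z = [True]" using xz(1,2) cube1 by auto
  show ?thesis using x z xz(3) unfolding xz(4) ci1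
    by (elim disjE) (auto simp: cle_nth)
qed

lemma two_int:
  assumes "y \<in> cube m" "j < m" "y!j"
  shows "is_interval m {y[j:=False], y}"
proof -
  have le: "cube_le (y[j:=False]) y" using assms by (auto simp: cle_nth cube_def nth_list_update)
  have "cube_interval m (y[j:=False]) y = {y[j:=False], y}"
  proof
    show "cube_interval m (y[j:=False]) y \<subseteq> {y[j:=False], y}"
    proof
      fix z assume z: "z \<in> cube_interval m (y[j:=False]) y"
      hence l: "length z = m" "\<And>i. i<m \<Longrightarrow> (y[j:=False])!i \<le> z!i" "\<And>i. i<m \<Longrightarrow> z!i \<le> y!i"
        using assms by (auto simp: cube_interval_def cube_def cle_nth)
      have ly: "length y = m" using assms by (simp add: cube_def)
      have oth: "z!i = y!i" if "i < m" "i \<noteq> j" for i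
        using l(2)[OF that(1)] l(3)[OF that(1)] that by (auto simp: nth_list_update)
      show "z \<in> {y[j:=False], y}"
      proof (cases "z!j")
        case True
        have "z = y" apply (rule nth_equalityI) using l(1) ly apply simp
          using oth True assms(3) by (metis l(1))
        thus ?thesis by simp
      next
        case False
        have "z = y[j:=False]" apply (rule nth_equalityI) using l(1) ly apply simp
          using oth False l(1) ly by (metis nth_list_update_eq nth_list_update_neq)
        thus ?thesis by simp
      qed
    qed
  next
    show "{y[j:=False], y} \<subseteq> cube_interval m (y[j:=False]) y"
      using le assms unfolding cube_interval_def cube_def cle_nth by auto
  qed
  moreover have "y[j:=False] \<in> cube m" using assms by (simp add: cube_def)
  ultimately show ?thesis unfolding is_interval_def using le assms(1) by blast
qed

lemma cnt_upd: "j < length y \<Longrightarrow> y!j \<Longrightarrow> length (filter id (y[j:=False])) < length (filter id y)"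
proof (induction y arbitrary: j)
  case Nil thus ?case by simp
next
  case (Cons a y) thus ?case by (cases j) auto
qed

theorem mainTheorem8:
  fixes m n :: nat and \<phi> \<delta> :: "bool list \<Rightarrow> bool list"
  assumes "box_morphism m n \<phi>" and "\<phi> ` cube m = cube n"
    and "box_morphism 1 n \<delta>" and "inj_on \<delta> (cube 1)"
  shows "\<exists>\<delta>'. box_morphism 1 m \<delta>' \<and> (\<forall>x\<in>cube 1. \<phi> (\<delta>' x) = \<delta> x)"
proof -
  note c1 = cube1
  have p1: "\<forall>x\<in>cube m. \<phi> x \<in> cube n"
    and p2: "\<forall>x\<in>cube m. \<forall>y\<in>cube m. cube_le x y \<longrightarrow> cube_le (\<phi> x) (\<phi> y)"
    and p3: "\<forall>S. is_interval m S \<longrightarrow> is_interval n (\<phi> ` S)"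
    using assms(1) unfolding box_morphism_def by auto
  define a where "a = \<delta> [False]"
  define b where "b = \<delta> [True]"
  have ab: "a \<noteq> b" using assms(4) unfolding a_def b_def inj_on_def c1 by auto
  have d: "\<forall>x\<in>cube 1. \<delta> x \<in> cube n"
    "\<forall>x\<in>cube 1. \<forall>y\<in>cube 1. cube_le x y \<longrightarrow> cube_le (\<delta> x) (\<delta> y)"
    "\<forall>S. is_interval 1 S \<longrightarrow> is_interval n (\<delta> ` S)"
    using assms(3) unfolding box_morphism_def by auto
  have an: "a \<in> cube n" and bn: "b \<in> cube n" using d(1) unfolding a_def b_def c1 by auto
  have ableq: "cube_le a b" using d(2) unfolding a_def b_def c1 by (auto simp: cle_nth)
  have "is_interval 1 (cube 1)" unfolding is_interval_def
    by (rule bexI[of _ "[False]"], rule bexI[of _ "[True]"])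
       (auto simp: cle_nth c1 cube1' cube_interval_def)
  hence "is_interval n {a, b}" using d(3) unfolding a_def b_def c1 by auto
  then obtain u v where uv: "u \<in> cube n" "v \<in> cube n" "cube_le u v" "{a,b} = cube_interval n u v"
    unfolding is_interval_def by auto
  have "u \<in> {a,b}" "v \<in> {a,b}" using uv by (auto simp: cube_interval_def cle_refl)
  hence "u = a \<and> v = b" using uv ab ableq cle_antisym
    by (smt (verit, ccfv_threshold) cle_refl cube_interval_def insertCI insertE mem_Collect_eq singletonD)
  hence AB: "\<And>c. c \<in> cube n \<Longrightarrow> cube_le a c \<Longrightarrow> cube_le c b \<Longrightarrow> c = a \<or> c = b"
    using uv(4) unfolding cube_interval_def by blast
  obtain x where x: "x \<in> cube m" "\<phi> x = a" using assms(2) an by force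
  obtain w where w: "w \<in> cube m" "\<phi> w = b" using assms(2) bn by force
  define top where "top = replicate m True"
  have topc: "top \<in> cube m" by (simp add: top_def cube_def)
  have letop: "\<And>z. z \<in> cube m \<Longrightarrow> cube_le z top" by (auto simp: top_def cube_def cle_nth)
  have "is_interval m (cube_interval m x top)"
    unfolding is_interval_def using x topc letop by blast
  then obtain p q where pq: "p \<in> cube n" "q \<in> cube n" "cube_le p q"
    "\<phi> ` cube_interval m x top = cube_interval n p q"
    using p3 unfolding is_interval_def by metis
  have "\<phi> x \<in> cube_interval n p q" "\<phi> top \<in> cube_interval n p q"
    using pq(4) x topc letop by (auto simp: cube_interval_def cle_refl)
  hence "cube_le p a" "cube_le (\<phi> top) q" using x by (auto simp: cube_interval_def)
  moreover have "cube_le b (\<phi> top)" using p2 w topc letop by metis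
  ultimately have "b \<in> cube_interval n p q" using ableq bn
    by (auto simp: cube_interval_def intro: cle_trans)
  then obtain y0 where y0: "y0 \<in> cube_interval m x top" "\<phi> y0 = b" using pq(4) by force
  define P where "P = (\<lambda>y. y \<in> cube m \<and> cube_le x y \<and> \<phi> y = b)"
  define cnt :: "bool list \<Rightarrow> nat" where "cnt = (\<lambda>y. length (filter id y))"
  have "P y0" using y0 unfolding P_def cube_interval_def by auto
  then obtain y where Py: "P y" and ymin: "\<And>z. P z \<Longrightarrow> cnt y \<le> cnt z"
    using ex_has_least_nat[of P y0 cnt] by blast
  have ym: "y \<in> cube m" and xy: "cube_le x y" and fy: "\<phi> y = b" using Py P_def by auto
  have "x \<noteq> y" using x fy ab by auto
  have "\<exists>j<m. \<not> x!j \<and> y!j"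
  proof (rule ccontr)
    assume "\<not> ?thesis"
    hence "\<forall>i<m. x!i = y!i" using xy x ym by (auto simp: cle_nth cube_def)
    hence "x = y" using x ym by (auto simp: cube_def intro: nth_equalityI)
    thus False using \<open>x \<noteq> y\<close> by simp
  qed
  then obtain j where j: "j < m" "\<not> x!j" "y!j" by blast
  define y' where "y' = y[j:=False]"
  have y'm: "y' \<in> cube m" using ym by (simp add: y'_def cube_def)
  have xy': "cube_le x y'" using xy j ym unfolding y'_def cle_nth cube_def
    by (auto simp: nth_list_update)
  have y'y: "cube_le y' y" using ym j unfolding y'_def cle_nth cube_def
    by (auto simp: nth_list_update)
  have "cube_le a (\<phi> y')" "cube_le (\<phi> y') b" using p2 x y'm ym xy' y'y fy by metis+
  hence "\<phi> y' = a \<or> \<phi> y' = b" using AB p1 y'm by blast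
  moreover have "cnt y' < cnt y" unfolding cnt_def y'_def
    using cnt_upd j ym by (simp add: cube_def)
  ultimately have fy': "\<phi> y' = a" using ymin[of y'] P_def y'm xy' by force
  define D where "D = (\<lambda>t::bool list. if t = [True] then y else y')"
  have "box_morphism 1 m D"
    unfolding box_morphism_def
  proof (intro conjI allI impI ballI)
    fix t assume "t \<in> cube 1" thus "D t \<in> cube m" using ym y'm by (auto simp: D_def)
  next
    fix s t assume "s \<in> cube 1" "t \<in> cube 1" "cube_le s t"
    thus "cube_le (D s) (D t)" using y'y unfolding c1 D_def by (auto simp: cle_refl cle_nth)
  next
    fix S assume "is_interval 1 S"
    hence "S = {[False]} \<or> S = {[True]} \<or> S = {[False],[True]}" using int1_cases by simp
    thus "is_interval m (D ` S)" using single_int[OF ym] single_int[OF y'm]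
        two_int[OF ym j(1) j(3)] unfolding D_def y'_def by auto
  qed
  moreover have "\<forall>t\<in>cube 1. \<phi> (D t) = \<delta> t"
    unfolding c1 D_def using fy fy' a_def b_def by auto
  ultimately show ?thesis by blast
qed

end
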